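(* Let $n$ be a positive integer, let $s=4n^{3/5}$ and $t=n-2(n\log n)^{1/2}$ (rounded to integers as appropriate, with $s,t$ even). Given any family $\mathcal{A}\subset\mathcal{P}[n]$ there exist sets $S\subset T\subset[n]$ with $|S|=s$ and $|T|=t$, a maximal chain $\mathcal{C}=\{C_i:i\in[0,n]\}\subset\mathcal{P}[n]$ with $|C_i|=i$ for all $i$, and a set $I\subset[0,n]$ with the following properties. (i) $C_i\in\mathcal{A}$ for all $i\in I$. (ii) $\sum_{i\in I}\binom{n}{i}\ge|\mathcal{A}|-\frac{2^{10}}{n^{2/3}}2^n$. (iii) There is $F_0\in S^{(s/2)}$ such that $C_i\cap S=F_0$ for all $i\in I$ (and $i\ge s/2$ for $i\in I$). Furthermore, for each $i\in I$ there is a family $\mathcal{F}_i\subset S^{(s/2)}$ with $|\mathcal{F}_i|\ge\frac1n\binom{s}{s/2}$ such that $(C_i\setminus F_0)\cup F\in\mathcal{A}$ for all $F\in\mathcal{F}_i$. (iv) There is $D_0\in T^{(t/2)}$ such that $C_i\cap T=D_0$ for all $i\in I$ (and $i\ge t/2$ for $i\in I$). Furthermore, for each $i\in I$ there is a family $\mathcal{D}_i\subset T^{(t/2)}$ with $|\mathcal{D}_i|\ge\frac1n\binom{t}{t/2}$ such that $(C_i\setminus D_0)\cup D\in\mathcal{A}$ for all $D\in\mathcal{D}_i$. (v) For all $i\in I$, every element of $\mathcal{D}_i$ has at least $n^{4/3}$ neighbours in $\mathcal{D}_i$.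
   Context: $[n]=\{1,\ldots,n\}$, $[a,b]=\{a,a+1,\ldots,b\}$, $\mathcal{P}[n]$ is the power set of $[n]$, and for a set $X$, $X^{(k)}$ is the set of $k$-element subsets of $X$. Two sets $A_1,A_2\in T^{(t/2)}$ are neighbours if $|A_1\triangle A_2|=2$. $\log$ is the natural logarithm. Floors and ceilings are omitted where not crucial. *)

theory Defs
  imports Complex_Main
begin

text \<open>Rounding convention: s = 4 n^(3/5) and t = n - 2 (n log n)^(1/2),
  each rounded down to an even integer.\<close>
definition s_par :: "nat \<Rightarrow> nat" where
  "s_par n = 2 * nat \<lfloor>2 * real n powr (3/5)\<rfloor>"

definition t_par :: "nat \<Rightarrow> nat" where
  "t_par n = 2 * nat \<lfloor>(real n - 2 * sqrt (real n * ln (real n))) / 2\<rfloor>"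

definition neighbours :: "'a set \<Rightarrow> 'a set \<Rightarrow> bool" where
  "neighbours A B \<longleftrightarrow> card ((A - B) \<union> (B - A)) = 2"

definition max_chain :: "nat \<Rightarrow> (nat \<Rightarrow> nat set) \<Rightarrow> bool" where
  "max_chain n C \<longleftrightarrow> (\<forall>i\<le>n. C i \<subseteq> {1..n} \<and> card (C i) = i) \<and> (\<forall>i<n. C i \<subseteq> C (Suc i))"

end

theory Submission
  imports Defs "HOL-Probability.Probability" "HOL-Combinatorics.Permutations" "HOL-Real_Asymp.Real_Asymp"
begin


lemma deg_remove:
  assumes "finite A" "v \<in> A" "x \<noteq> v"
  shows "real (card {y\<in>A. R x y}) = real (card {y\<in>A-{v}. R x y}) + (if R x v then 1 else 0)"
proof -
  have "{y\<in>A. R x y} = {y\<in>A-{v}. R x y} \<union> (if R x v then {v} else {})"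
    using assms by auto
  moreover have "finite {y\<in>A-{v}. R x y}" using assms by auto
  ultimately show ?thesis by (auto simp: card_insert_if)
qed

lemma degen_sum:
  fixes R :: "'a \<Rightarrow> 'a \<Rightarrow> bool" and d :: real
  assumes fin: "finite B" and sym: "\<And>x y. R x y \<Longrightarrow> R y x" and irr: "\<And>x. \<not> R x x"
    and hyp: "\<And>C. C \<subseteq> B \<Longrightarrow> C \<noteq> {} \<Longrightarrow> (\<exists>x\<in>C. real (card {y\<in>C. R x y}) < d)"
  shows "(\<Sum>x\<in>B. real (card {y\<in>B. R x y})) \<le> 2 * d * real (card B)"
  using fin
proof (induction B rule: finite_remove_induct)
  case empty then show ?case by simp
next
  case (remove A)
  obtain v where v: "v \<in> A" "real (card {y\<in>A. R v y}) < d" using hyp[OF remove(3) remove(2)] by blast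
  have IH: "(\<Sum>x\<in>A-{v}. real (card {y\<in>A-{v}. R x y})) \<le> 2 * d * real (card (A-{v}))"
    using remove(4)[OF v(1)] .
  have "(\<Sum>x\<in>A. real (card {y\<in>A. R x y})) = real (card {y\<in>A. R v y}) + (\<Sum>x\<in>A-{v}. real (card {y\<in>A. R x y}))"
    using remove(1) v(1) by (simp add: sum.remove)
  also have "(\<Sum>x\<in>A-{v}. real (card {y\<in>A. R x y})) = (\<Sum>x\<in>A-{v}. real (card {y\<in>A-{v}. R x y})) + (\<Sum>x\<in>A-{v}. (if R x v then 1 else 0))"
    by (subst sum.distrib[symmetric], rule sum.cong[OF refl], rule deg_remove) (use remove(1) v(1) in auto)
  also have "(\<Sum>x\<in>A-{v}. (if R x v then 1 else 0::real)) = real (card {y\<in>A. R v y})"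
  proof -
    have "(\<Sum>x\<in>A-{v}. (if R x v then 1 else 0::real)) = real (card {x\<in>A-{v}. R x v})"
      using remove(1) by (simp add: sum.If_cases Int_def Diff_eq conj_commute)
    also have "{x\<in>A-{v}. R x v} = {y\<in>A. R v y}" using sym irr by auto
    finally show ?thesis .
  qed
  finally have "(\<Sum>x\<in>A. real (card {y\<in>A. R x y})) \<le> 2 * d + 2 * d * real (card (A-{v}))"
    using IH v(2) by linarith
  also have "\<dots> = 2 * d * real (card A)"
    using remove(1) v(1) card_Diff_singleton[of v A] card_gt_0_iff[of A]
    by (auto simp: algebra_simps of_nat_diff)
  finally show ?case .
qed

lemma choose_pred: "k \<ge> 1 \<Longrightarrow> k choose (k - 1) = k"
  using binomial_symmetric[of "k-1" k] by simp

lemma card_filter_sum: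
  "finite A \<Longrightarrow> real (card {x\<in>A. P x}) = (\<Sum>x\<in>A. if P x then 1 else 0)"
  by (simp add: sum.If_cases Int_def)

lemma nb_inter:
  assumes "finite D" "finite D'" "card D = k" "card D' = k" "D \<noteq> D'"
  shows "card (D \<inter> D') < k \<and> (neighbours D D' \<longleftrightarrow> card (D \<inter> D') = k - 1)"
proof -
  let ?c = "card (D \<inter> D')"
  have c1: "card (D - D') = k - ?c" using assms by (simp add: card_Diff_subset_Int Diff_Int)
  have "card (D - D') = card D - card (D \<inter> D')" using assms by (metis Diff_Int2 card_Diff_subset_Int finite_Int inf.idem)
  have c2: "card (D' - D) = k - ?c" using assms by (metis Diff_Int2 card_Diff_subset_Int finite_Int inf.idem inf_commute)
  have dis: "card ((D - D') \<union> (D' - D)) = card (D - D') + card (D' - D)"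
    using assms by (intro card_Un_disjoint) auto
  have lt: "?c < k"
  proof (rule ccontr)
    assume "\<not> ?c < k"
    then have "?c \<ge> card D" using assms by simp
    then have "D \<inter> D' = D" using assms by (metis card_seteq finite_Int inf_le1)
    then have "D \<subseteq> D'" by blast
    then have "D = D'" using assms by (metis card_subset_eq)
    then show False using assms by simp
  qed
  show ?thesis using lt dis c1 c2 unfolding neighbours_def by auto
qed

lemma johnson_bound:
  fixes d :: real
  assumes finT: "finite T" and k: "k \<ge> 1" and d0: "d \<ge> 0" and B: "B \<subseteq> {D. D \<subseteq> T \<and> card D = k}"
    and hsum: "(\<Sum>x\<in>B. real (card {y\<in>B. neighbours x y})) \<le> 2 * d * real (card B)"
  shows "real (card B) * real k ^ 2 \<le> real (card T choose (k - 1)) * (2 * d + real k)"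
proof -
  define Ws where "Ws = {W. W \<subseteq> T \<and> card W = k - 1}"
  define r where "r W = real (card {D\<in>B. W \<subseteq> D})" for W
  have "B \<subseteq> Pow T" using B by auto
  then have finB: "finite B" using finT by (metis finite_Pow_iff finite_subset)
  have finWs: "finite Ws" unfolding Ws_def using finT by simp
  have cardWs: "card Ws = card T choose (k - 1)" unfolding Ws_def using n_subsets[OF finT] .
  have finD: "finite D" if "D \<in> B" for D using that B finT by (auto intro: finite_subset)
  have sub: "{W \<in> Ws. W \<subseteq> D \<and> W \<subseteq> D'} = {W. W \<subseteq> D \<inter> D' \<and> card W = k - 1}" if "D \<in> B" for D D'
    using that B unfolding Ws_def by auto
  have f1: "(\<Sum>W\<in>Ws. r W) = real (card B) * real k"
  proof -
    have "(\<Sum>W\<in>Ws. r W) = (\<Sum>W\<in>Ws. \<Sum>D\<in>B. if W \<subseteq> D then 1 else 0)"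
      unfolding r_def using finB by (simp add: card_filter_sum)
    also have "\<dots> = (\<Sum>D\<in>B. \<Sum>W\<in>Ws. if W \<subseteq> D then 1 else 0)" by (rule sum.swap)
    also have "\<dots> = (\<Sum>D\<in>B. real k)"
    proof (rule sum.cong[OF refl])
      fix D assume D: "D \<in> B"
      have "(\<Sum>W\<in>Ws. if W \<subseteq> D then 1 else 0) = real (card {W\<in>Ws. W \<subseteq> D})"
        using finWs by (simp add: card_filter_sum)
      also have "{W\<in>Ws. W \<subseteq> D} = {W. W \<subseteq> D \<and> card W = k - 1}" using sub[OF D, of D] by simp
      also have "card \<dots> = card D choose (k - 1)" using n_subsets[OF finD[OF D]] .
      also have "card D = k" using D B by auto
      finally show "(\<Sum>W\<in>Ws. if W \<subseteq> D then 1 else 0) = real k" using choose_pred[OF k] by simp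
    qed
    finally show ?thesis by simp
  qed
  have f2: "(\<Sum>W\<in>Ws. (r W)^2) = real (card B) * real k + (\<Sum>x\<in>B. real (card {y\<in>B. neighbours x y}))"
  proof -
    have "(\<Sum>W\<in>Ws. (r W)^2) = (\<Sum>W\<in>Ws. \<Sum>D\<in>B. \<Sum>D'\<in>B. if W \<subseteq> D \<and> W \<subseteq> D' then 1 else 0)"
    proof (rule sum.cong[OF refl])
      fix W
      have "(r W)^2 = (\<Sum>D\<in>B. if W \<subseteq> D then 1 else 0) * (\<Sum>D'\<in>B. if W \<subseteq> D' then 1 else (0::real))"
        unfolding r_def power2_eq_square using finB card_filter_sum[OF finB, of "\<lambda>D. W \<subseteq> D"] by simp
      also have "\<dots> = (\<Sum>D\<in>B. \<Sum>D'\<in>B. (if W \<subseteq> D then 1 else 0) * (if W \<subseteq> D' then 1 else (0::real)))"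
        by (rule sum_product)
      also have "\<dots> = (\<Sum>D\<in>B. \<Sum>D'\<in>B. if W \<subseteq> D \<and> W \<subseteq> D' then 1 else 0)"
        by (intro sum.cong refl) auto
      finally show "(r W)^2 = (\<Sum>D\<in>B. \<Sum>D'\<in>B. if W \<subseteq> D \<and> W \<subseteq> D' then 1 else 0)" .
    qed
    also have "\<dots> = (\<Sum>D\<in>B. \<Sum>W\<in>Ws. \<Sum>D'\<in>B. if W \<subseteq> D \<and> W \<subseteq> D' then 1 else 0)" by (rule sum.swap)
    also have "\<dots> = (\<Sum>D\<in>B. \<Sum>D'\<in>B. \<Sum>W\<in>Ws. if W \<subseteq> D \<and> W \<subseteq> D' then 1 else 0)"
      by (rule sum.cong[OF refl], rule sum.swap)
    also have "\<dots> = (\<Sum>D\<in>B. real k + real (card {y\<in>B. neighbours D y}))"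
    proof (rule sum.cong[OF refl])
      fix D assume D: "D \<in> B"
      have inner: "(\<Sum>W\<in>Ws. if W \<subseteq> D \<and> W \<subseteq> D' then 1 else 0) = real (card (D \<inter> D') choose (k - 1))" if D': "D' \<in> B" for D'
      proof -
        have "(\<Sum>W\<in>Ws. if W \<subseteq> D \<and> W \<subseteq> D' then 1 else 0) = real (card {W\<in>Ws. W \<subseteq> D \<and> W \<subseteq> D'})"
          using finWs by (simp add: card_filter_sum)
        also have "\<dots> = real (card (D \<inter> D') choose (k - 1))"
          using sub[OF D, of D'] n_subsets[of "D \<inter> D'" "k-1"] finD[OF D] by simp
        finally show ?thesis .
      qed
      have "(\<Sum>D'\<in>B. \<Sum>W\<in>Ws. if W \<subseteq> D \<and> W \<subseteq> D' then 1 else 0) = (\<Sum>D'\<in>B. real (card (D \<inter> D') choose (k - 1)))"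
        using inner by (rule sum.cong[OF refl])
      also have "\<dots> = real (card (D \<inter> D) choose (k - 1)) + (\<Sum>D'\<in>B-{D}. real (card (D \<inter> D') choose (k - 1)))"
        using finB D by (simp add: sum.remove)
      also have "real (card (D \<inter> D) choose (k - 1)) = real k"
        using D B choose_pred[OF k] by auto 
      also have "(\<Sum>D'\<in>B-{D}. real (card (D \<inter> D') choose (k - 1))) = (\<Sum>D'\<in>B-{D}. if neighbours D D' then 1 else 0)"
      proof (rule sum.cong[OF refl])
        fix D' assume D': "D' \<in> B - {D}"
        have ck: "card D = k" "card D' = k" using D D' B by auto
        from nb_inter[OF finD[OF D] finD[of D'] ck] D' 
        have h: "card (D \<inter> D') < k \<and> (neighbours D D' \<longleftrightarrow> card (D \<inter> D') = k - 1)" by auto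
        show "real (card (D \<inter> D') choose (k - 1)) = (if neighbours D D' then 1 else 0)"
        proof (cases "neighbours D D'")
          case True then show ?thesis using h by simp
        next
          case False then have "card (D \<inter> D') < k - 1" using h by auto
          then show ?thesis using False by (simp add: binomial_eq_0)
        qed
      qed
      also have "\<dots> = real (card {y\<in>B-{D}. neighbours D y})" using card_filter_sum[of "B-{D}" "neighbours D"] finB by simp
      also have "{y\<in>B-{D}. neighbours D y} = {y\<in>B. neighbours D y}" by (auto simp: neighbours_def)
      finally show "(\<Sum>D'\<in>B. \<Sum>W\<in>Ws. if W \<subseteq> D \<and> W \<subseteq> D' then 1 else 0) = real k + real (card {y\<in>B. neighbours D y})" .
    qed
    also have "\<dots> = real (card B) * real k + (\<Sum>x\<in>B. real (card {y\<in>B. neighbours x y}))"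
      by (simp add: sum.distrib)
    finally show ?thesis .
  qed
  have cs: "(\<Sum>W\<in>Ws. r W)^2 \<le> (\<Sum>W\<in>Ws. (r W)^2) * real (card Ws)"
    by (rule sum_squared_le_sum_of_squares)
  then have "(real (card B) * real k)^2 \<le> (real (card B) * real k + 2 * d * real (card B)) * real (card Ws)"
    using f1 f2 hsum by (smt (verit, best) mult_right_mono of_nat_0_le_iff)
  then have "real (card B) * (real (card B) * real k ^ 2) \<le> real (card B) * (real (card Ws) * (2 * d + real k))"
    by (simp add: power2_eq_square algebra_simps)
  then have "real (card B) * real k ^ 2 \<le> real (card Ws) * (2 * d + real k)" if "card B > 0"
    using that by (simp add: mult_le_cancel_left_pos)
  moreover have "0 \<le> real (card Ws) * (2 * d + real k)" if "card B = 0"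
    using d0 by simp
  ultimately show ?thesis using cardWs by (cases "card B = 0") auto
qed

definition core :: "real \<Rightarrow> 'a set set \<Rightarrow> 'a set set" where
  "core d \<B> = \<Union>{\<D>. \<D> \<subseteq> \<B> \<and> (\<forall>D\<in>\<D>. real (card {D'\<in>\<D>. neighbours D D'}) \<ge> d)}"

lemma core_sub: "core d \<B> \<subseteq> \<B>"
  unfolding core_def by blast

lemma core_deg:
  assumes fin: "finite \<B>" and D: "D \<in> core d \<B>"
  shows "real (card {D'\<in>core d \<B>. neighbours D D'}) \<ge> d"
proof -
  obtain \<D> where DD: "\<D> \<subseteq> \<B>" "\<forall>D\<in>\<D>. real (card {D'\<in>\<D>. neighbours D D'}) \<ge> d" "D \<in> \<D>"
    using D unfolding core_def by blast
  have sub: "\<D> \<subseteq> core d \<B>" using DD unfolding core_def by blast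
  have "finite (core d \<B>)" using fin core_sub finite_subset by metis
  then have "card {D'\<in>\<D>. neighbours D D'} \<le> card {D'\<in>core d \<B>. neighbours D D'}"
    using sub by (intro card_mono) auto
  then show ?thesis using DD(2,3) by (meson of_nat_le_iff order_trans)
qed

lemma neighbours_sym: "neighbours A B \<Longrightarrow> neighbours B A"
  unfolding neighbours_def by (simp add: Un_commute)

lemma neighbours_irr: "\<not> neighbours A A"
  unfolding neighbours_def by simp

lemma core_big:
  fixes d :: real
  assumes finT: "finite T" and k: "k \<ge> 1" and d0: "d \<ge> 0" and B: "\<B> \<subseteq> {D. D \<subseteq> T \<and> card D = k}"
  shows "real (card \<B>) \<le> real (card (core d \<B>)) + real (card T choose (k - 1)) * (2 * d + real k) / real k ^ 2"
proof -
  define R where "R = \<B> - core d \<B>"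
  have "\<B> \<subseteq> Pow T" using B by auto
  then have finB: "finite \<B>" using finT by (metis finite_Pow_iff finite_subset)
  have finR: "finite R" unfolding R_def using finB by simp
  have hyp: "\<exists>x\<in>C. real (card {y\<in>C. neighbours x y}) < d" if C: "C \<subseteq> R" "C \<noteq> {}" for C
  proof (rule ccontr)
    assume "\<not> ?thesis"
    then have "\<forall>x\<in>C. real (card {y\<in>C. neighbours x y}) \<ge> d" by (auto simp: not_less)
    moreover have "C \<subseteq> \<B>" using C unfolding R_def by auto
    ultimately have "C \<subseteq> core d \<B>" unfolding core_def by blast
    then show False using C unfolding R_def by blast
  qed
  have hs: "(\<Sum>x\<in>R. real (card {y\<in>R. neighbours x y})) \<le> 2 * d * real (card R)"
    by (rule degen_sum[OF finR]) (auto intro: neighbours_sym simp: neighbours_irr hyp)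
  have "real (card R) * real k ^ 2 \<le> real (card T choose (k - 1)) * (2 * d + real k)"
    by (rule johnson_bound[OF finT k d0 _ hs]) (use B in \<open>auto simp: R_def\<close>)
  then have r: "real (card R) \<le> real (card T choose (k - 1)) * (2 * d + real k) / real k ^ 2"
    using k by (simp add: field_simps)
  have "card \<B> = card (core d \<B>) + card R"
    unfolding R_def using finB core_sub[of d \<B>] by (metis card_Diff_subset finite_subset le_add_diff_inverse card_mono)
  then show ?thesis using r by simp
qed



lemma exists_perm:
  assumes P: "finite P" and X: "X \<subseteq> P" and Y: "Y \<subseteq> P" and c: "card X = card Y"
  shows "\<exists>\<pi>. \<pi> permutes P \<and> \<pi> ` X = Y"
proof -
  have fX: "finite X" "finite Y" using P X Y finite_subset by auto
  obtain f where f: "bij_betw f X Y" using finite_same_card_bij[OF fX c] by blast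
  have "card (P - X) = card (P - Y)" using c X Y P fX by (simp add: card_Diff_subset)
  then obtain g where g: "bij_betw g (P - X) (P - Y)" using finite_same_card_bij P by (meson finite_Diff)
  define \<pi> where "\<pi> x = (if x \<in> X then f x else if x \<in> P then g x else x)" for x
  have b1: "bij_betw \<pi> X Y" using f by (rule bij_betw_cong[THEN iffD1, rotated]) (simp add: \<pi>_def)
  have b2: "bij_betw \<pi> (P - X) (P - Y)" using g by (rule bij_betw_cong[THEN iffD1, rotated]) (simp add: \<pi>_def)
  have "bij_betw \<pi> (X \<union> (P - X)) (Y \<union> (P - Y))" by (rule bij_betw_combine[OF b1 b2]) auto
  then have "bij_betw \<pi> P P" using X Y by (simp add: Un_Diff_cancel Un_absorb1)
  then have "\<pi> permutes P" by (rule bij_imp_permutes) (auto simp: \<pi>_def dest: subsetD[OF X])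
  moreover have "\<pi> ` X = Y" using b1 by (simp add: bij_betw_def)
  ultimately show ?thesis by blast
qed

lemma fiber_le:
  assumes P: "finite P" and X: "X \<subseteq> P" and Y: "Y \<subseteq> P" and c: "card X = card Y"
  shows "card {\<kappa>. \<kappa> permutes P \<and> \<kappa> ` Q = X} \<le> card {\<kappa>. \<kappa> permutes P \<and> \<kappa> ` Q = Y}"
proof -
  obtain \<pi> where pi: "\<pi> permutes P" "\<pi> ` X = Y" using exists_perm[OF P X Y c] by blast
  have "card ((\<lambda>\<kappa>. \<pi> \<circ> \<kappa>) ` {\<kappa>. \<kappa> permutes P \<and> \<kappa> ` Q = X}) = card {\<kappa>. \<kappa> permutes P \<and> \<kappa> ` Q = X}"
  proof (rule card_image, rule inj_onI)
    fix a b assume "\<pi> \<circ> a = \<pi> \<circ> b"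
    then show "a = b" using permutes_inj[OF pi(1)] by (auto simp: fun_eq_iff inj_def)
  qed
  moreover have "(\<lambda>\<kappa>. \<pi> \<circ> \<kappa>) ` {\<kappa>. \<kappa> permutes P \<and> \<kappa> ` Q = X} \<subseteq> {\<kappa>. \<kappa> permutes P \<and> \<kappa> ` Q = Y}"
  proof
    fix \<rho> assume "\<rho> \<in> (\<lambda>\<kappa>. \<pi> \<circ> \<kappa>) ` {\<kappa>. \<kappa> permutes P \<and> \<kappa> ` Q = X}"
    then obtain \<kappa> where k: "\<kappa> permutes P" "\<kappa> ` Q = X" "\<rho> = \<pi> \<circ> \<kappa>" by blast
    have "\<rho> permutes P" using k(3) permutes_compose[OF k(1) pi(1)] by simp
    moreover have "\<rho> ` Q = Y" using k(2,3) pi(2) image_comp[of \<pi> \<kappa> Q] by simp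
    ultimately show "\<rho> \<in> {\<kappa>. \<kappa> permutes P \<and> \<kappa> ` Q = Y}" by simp
  qed
  moreover have "finite {\<kappa>. \<kappa> permutes P \<and> \<kappa> ` Q = Y}"
    by (rule finite_subset[OF _ finite_permutations[OF P]]) blast
  ultimately show ?thesis by (metis (no_types, lifting) card_mono)
qed

lemma fiber_eq:
  assumes P: "finite P" and X: "X \<subseteq> P" and Y: "Y \<subseteq> P" and c: "card X = card Y"
  shows "card {\<kappa>. \<kappa> permutes P \<and> \<kappa> ` Q = X} = card {\<kappa>. \<kappa> permutes P \<and> \<kappa> ` Q = Y}"
  using fiber_le[OF P X Y c, of Q] fiber_le[OF P Y X c[symmetric], of Q] by (rule antisym)

lemma perm_count0:
  assumes P: "finite P" and Q: "Q \<subseteq> P" and B: "\<B> \<subseteq> {X. X \<subseteq> P \<and> card X = card Q}"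
  shows "card {\<kappa>. \<kappa> permutes P \<and> \<kappa> ` Q \<in> \<B>} = card \<B> * card {\<kappa>. \<kappa> permutes P \<and> \<kappa> ` Q = Q}"
proof -
  have "\<B> \<subseteq> Pow P" using B by auto
  then have finB: "finite \<B>" using P by (metis finite_Pow_iff finite_subset)
  have "{\<kappa>. \<kappa> permutes P \<and> \<kappa> ` Q \<in> \<B>} = (\<Union>X\<in>\<B>. {\<kappa>. \<kappa> permutes P \<and> \<kappa> ` Q = X})" by auto
  also have "card \<dots> = (\<Sum>X\<in>\<B>. card {\<kappa>. \<kappa> permutes P \<and> \<kappa> ` Q = X})"
  proof (rule card_UN_disjoint[OF finB])
    show "\<forall>X\<in>\<B>. finite {\<kappa>. \<kappa> permutes P \<and> \<kappa> ` Q = X}"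
    proof
      fix X show "finite {\<kappa>. \<kappa> permutes P \<and> \<kappa> ` Q = X}"
        by (rule finite_subset[OF _ finite_permutations[OF P]]) blast
    qed
  qed blast
  also have "\<dots> = (\<Sum>X\<in>\<B>. card {\<kappa>. \<kappa> permutes P \<and> \<kappa> ` Q = Q})"
    by (rule sum.cong[OF refl], rule fiber_eq[OF P _ Q]) (use B in auto)
  finally show ?thesis by simp
qed

lemma perm_count1:
  assumes P: "finite P" and Q: "Q \<subseteq> P" and B: "\<B> \<subseteq> {X. X \<subseteq> P \<and> card X = card Q}"
  shows "card {\<kappa>. \<kappa> permutes P \<and> \<kappa> ` Q \<in> \<B>} * (card P choose card Q) = card \<B> * fact (card P)"
proof -
  let ?all = "{X. X \<subseteq> P \<and> card X = card Q}"
  have "card {\<kappa>. \<kappa> permutes P \<and> \<kappa> ` Q \<in> ?all} = card ?all * card {\<kappa>. \<kappa> permutes P \<and> \<kappa> ` Q = Q}"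
    by (rule perm_count0[OF P Q]) simp
  moreover have "{\<kappa>. \<kappa> permutes P \<and> \<kappa> ` Q \<in> ?all} = {\<kappa>. \<kappa> permutes P}"
  proof (intro set_eqI iffI)
    fix \<kappa> assume "\<kappa> \<in> {\<kappa>. \<kappa> permutes P}"
    then have k: "\<kappa> permutes P" by simp
    have "\<kappa> ` Q \<subseteq> P" using permutes_image[OF k] Q by blast
    moreover have "card (\<kappa> ` Q) = card Q" using permutes_inj[OF k] by (simp add: card_image inj_on_subset)
    ultimately show "\<kappa> \<in> {\<kappa>. \<kappa> permutes P \<and> \<kappa> ` Q \<in> ?all}" using k by simp
  qed simp
  moreover have "card ?all = card P choose card Q" by (rule n_subsets[OF P])
  ultimately have "fact (card P) = (card P choose card Q) * card {\<kappa>. \<kappa> permutes P \<and> \<kappa> ` Q = Q}"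
    using card_permutations[OF refl P] by simp
  then show ?thesis using perm_count0[OF P Q B] by (simp add: algebra_simps)
qed

lemma perm_count2:
  assumes P: "finite P" and Q: "Q \<subseteq> P" and inj: "inj_on \<sigma> P"
    and B: "\<B> \<subseteq> {X. X \<subseteq> \<sigma> ` P \<and> card X = card Q}"
  shows "card {\<kappa>. \<kappa> permutes P \<and> \<sigma> ` (\<kappa> ` Q) \<in> \<B>} * (card P choose card Q) = card \<B> * fact (card P)"
proof -
  define B' where "B' = {X. X \<subseteq> P \<and> card X = card Q \<and> \<sigma> ` X \<in> \<B>}"
  have eq: "{\<kappa>. \<kappa> permutes P \<and> \<sigma> ` (\<kappa> ` Q) \<in> \<B>} = {\<kappa>. \<kappa> permutes P \<and> \<kappa> ` Q \<in> B'}"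
  proof (intro set_eqI iffI)
    fix \<kappa> assume "\<kappa> \<in> {\<kappa>. \<kappa> permutes P \<and> \<sigma> ` (\<kappa> ` Q) \<in> \<B>}"
    then have k: "\<kappa> permutes P" "\<sigma> ` (\<kappa> ` Q) \<in> \<B>" by auto
    have "\<kappa> ` Q \<subseteq> P" using permutes_image[OF k(1)] Q by blast
    moreover have "card (\<kappa> ` Q) = card Q" using permutes_inj[OF k(1)] by (simp add: card_image inj_on_subset)
    ultimately show "\<kappa> \<in> {\<kappa>. \<kappa> permutes P \<and> \<kappa> ` Q \<in> B'}" using k unfolding B'_def by simp
  qed (auto simp: B'_def)
  have "bij_betw (image \<sigma>) B' \<B>"
  proof (rule bij_betw_imageI)
    show "inj_on ((`) \<sigma>) B'" using inj_on_image_Pow[OF inj] by (rule inj_on_subset) (auto simp: B'_def)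
    show "(`) \<sigma> ` B' = \<B>"
    proof (intro set_eqI iffI)
      fix X assume "X \<in> \<B>"
      then have X: "X \<subseteq> \<sigma> ` P" "card X = card Q" "X \<in> \<B>" using B by auto
      obtain Z where Z: "Z \<subseteq> P" "X = \<sigma> ` Z" using X(1) by (auto simp: subset_image_iff)
      have "card Z = card Q" using X(2) Z card_image[OF inj_on_subset[OF inj Z(1)]] by simp
      then show "X \<in> (`) \<sigma> ` B'" using Z X unfolding B'_def by blast
    qed (auto simp: B'_def)
  qed
  then have "card B' = card \<B>" by (rule bij_betw_same_card)
  moreover have "B' \<subseteq> {X. X \<subseteq> P \<and> card X = card Q}" by (auto simp: B'_def)
  ultimately have "card {\<kappa>. \<kappa> permutes P \<and> \<kappa> ` Q \<in> B'} * (card P choose card Q) = card B' * fact (card P)"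
    using perm_count1[OF P Q] by blast
  then show ?thesis using eq \<open>card B' = card \<B>\<close> by simp
qed

lemma perm_right_bij:
  assumes k: "\<kappa> permutes S"
  shows "bij_betw (\<lambda>\<sigma>. \<sigma> \<circ> \<kappa>) {\<sigma>. \<sigma> permutes S} {\<sigma>. \<sigma> permutes S}"
proof (rule bij_betw_byWitness[where f'="\<lambda>\<sigma>. \<sigma> \<circ> inv \<kappa>"])
  show "\<forall>a\<in>{\<sigma>. \<sigma> permutes S}. a \<circ> \<kappa> \<circ> inv \<kappa> = a"
    using permutes_inv_o[OF k] by (simp add: comp_assoc)
  show "\<forall>a\<in>{\<sigma>. \<sigma> permutes S}. a \<circ> inv \<kappa> \<circ> \<kappa> = a"
    using permutes_inv_o[OF k] by (simp add: comp_assoc)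
  show "(\<lambda>\<sigma>. \<sigma> \<circ> \<kappa>) ` {\<sigma>. \<sigma> permutes S} \<subseteq> {\<sigma>. \<sigma> permutes S}"
    using k by (auto intro: permutes_compose)
  show "(\<lambda>\<sigma>. \<sigma> \<circ> inv \<kappa>) ` {\<sigma>. \<sigma> permutes S} \<subseteq> {\<sigma>. \<sigma> permutes S}"
    using permutes_inv[OF k] by (auto intro: permutes_compose)
qed

lemma orbit_avg:
  fixes G K :: "('a \<Rightarrow> 'a) set" and \<beta> :: real
  assumes finG: "finite G" and finK: "finite K" and Kne: "K \<noteq> {}"
    and bij: "\<And>\<kappa>. \<kappa> \<in> K \<Longrightarrow> bij_betw (\<lambda>\<sigma>. \<sigma> \<circ> \<kappa>) G G"
    and loc: "\<And>\<sigma>. \<sigma> \<in> G \<Longrightarrow> real (card {\<kappa>\<in>K. bad (\<sigma> \<circ> \<kappa>)}) \<le> \<beta> * real (card K)"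
  shows "real (card {\<sigma>\<in>G. bad \<sigma>}) \<le> \<beta> * real (card G)"
proof -
  have c: "card {\<sigma>\<in>G. bad \<sigma>} = card {\<sigma>\<in>G. bad (\<sigma> \<circ> \<kappa>)}" if k: "\<kappa> \<in> K" for \<kappa>
  proof -
    have "bij_betw (\<lambda>\<sigma>. \<sigma> \<circ> \<kappa>) {\<sigma>\<in>G. bad (\<sigma> \<circ> \<kappa>)} {\<sigma>\<in>G. bad \<sigma>}"
      using bij[OF k] unfolding bij_betw_def inj_on_def by auto
    then show ?thesis by (simp add: bij_betw_same_card)
  qed
  have "real (card K) * real (card {\<sigma>\<in>G. bad \<sigma>}) = (\<Sum>\<kappa>\<in>K. real (card {\<sigma>\<in>G. bad (\<sigma> \<circ> \<kappa>)}))"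
  proof -
    have "(\<Sum>\<kappa>\<in>K. real (card {\<sigma>\<in>G. bad (\<sigma> \<circ> \<kappa>)})) = (\<Sum>\<kappa>\<in>K. real (card {\<sigma>\<in>G. bad \<sigma>}))"
      using c by (intro sum.cong) auto
    then show ?thesis by simp
  qed
  also have "\<dots> = (\<Sum>\<kappa>\<in>K. \<Sum>\<sigma>\<in>G. if bad (\<sigma> \<circ> \<kappa>) then 1 else 0)"
    using finG by (simp add: sum.If_cases Int_def)
  also have "\<dots> = (\<Sum>\<sigma>\<in>G. \<Sum>\<kappa>\<in>K. if bad (\<sigma> \<circ> \<kappa>) then 1 else 0)" by (rule sum.swap)
  also have "\<dots> = (\<Sum>\<sigma>\<in>G. real (card {\<kappa>\<in>K. bad (\<sigma> \<circ> \<kappa>)}))"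
    using finK by (simp add: sum.If_cases Int_def)
  also have "\<dots> \<le> (\<Sum>\<sigma>\<in>G. \<beta> * real (card K))" by (rule sum_mono) (rule loc)
  also have "\<dots> = real (card K) * (\<beta> * real (card G))" by simp
  finally show ?thesis using Kne finK by (simp add: card_gt_0_iff mult_le_cancel_left_pos)
qed



definition blk :: "nat \<Rightarrow> nat \<Rightarrow> nat set" where
  "blk n k = {1..k} \<union> {n-k<..n}"

definition FFs :: "nat set set \<Rightarrow> (nat \<Rightarrow> nat) \<Rightarrow> nat set \<Rightarrow> nat \<Rightarrow> nat \<Rightarrow> nat set set" where
  "FFs A \<sigma> P k i = {F. F \<subseteq> \<sigma> ` P \<and> card F = k \<and> \<sigma> ` {Suc k..i} \<union> F \<in> A}"

lemma blk_sub: "k \<le> n \<Longrightarrow> blk n k \<subseteq> {1..n}" unfolding blk_def by auto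

lemma img_o: "(f \<circ> g) ` X = f ` (g ` X)" by auto

lemma blk_card: "2 * k \<le> n \<Longrightarrow> card (blk n k) = 2 * k"
  unfolding blk_def by (subst card_Un_disjoint) auto

lemma blk_mono: "k \<le> h \<Longrightarrow> h \<le> n \<Longrightarrow> blk n k \<subseteq> blk n h"
  unfolding blk_def by auto

lemma perm_fix_outside:
  assumes "\<kappa> permutes P" "X \<inter> P = {}"
  shows "\<kappa> ` X = X"
proof -
  have "\<kappa> ` X = id ` X"
  proof (rule image_cong[OF refl])
    fix x assume "x \<in> X"
    then have "x \<notin> P" using assms(2) by blast
    then show "\<kappa> x = id x" using permutes_not_in[OF assms(1)] by simp
  qed
  then show ?thesis by simp
qed

lemma seg_disj: "k \<le> i \<Longrightarrow> i \<le> n - k \<Longrightarrow> {Suc k..i} \<inter> blk n k = {}"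
  unfolding blk_def by auto

lemma FFs_inv:
  assumes k: "\<kappa> permutes blk n k" and i: "k \<le> i" "i \<le> n - k"
  shows "FFs A (\<sigma> \<circ> \<kappa>) (blk n k) k i = FFs A \<sigma> (blk n k) k i"
proof -
  have "(\<sigma> \<circ> \<kappa>) ` blk n k = \<sigma> ` blk n k" using permutes_image[OF k] unfolding img_o by simp
  moreover have "(\<sigma> \<circ> \<kappa>) ` {Suc k..i} = \<sigma> ` {Suc k..i}"
    using perm_fix_outside[OF k seg_disj[OF i]] unfolding img_o by simp
  ultimately show ?thesis unfolding FFs_def by simp
qed

lemma chain_split:
  assumes k: "\<kappa> permutes blk n k" and i: "k \<le> i" "i \<le> n - k"
  shows "(\<sigma> \<circ> \<kappa>) ` {1..i} = \<sigma> ` (\<kappa> ` {1..k}) \<union> \<sigma> ` {Suc k..i}"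
proof -
  have "{1..i} = {1..k} \<union> {Suc k..i}" using i by auto
  then have "(\<sigma> \<circ> \<kappa>) ` {1..i} = \<sigma> ` (\<kappa> ` {1..k}) \<union> \<sigma> ` (\<kappa> ` {Suc k..i})"
    by (simp add: image_Un image_comp)
  then show ?thesis using perm_fix_outside[OF k seg_disj[OF i]] by simp
qed

lemma bad_local:
  assumes \<sigma>: "\<sigma> permutes {1..n}" and k: "2 * k \<le> n" and i: "k \<le> i" "i \<le> n - k"
  shows "real (card {\<kappa>\<in>{\<kappa>. \<kappa> permutes blk n k}. (\<sigma> \<circ> \<kappa>) ` {1..i} \<in> A \<and> \<Phi> (FFs A (\<sigma> \<circ> \<kappa>) (blk n k) k i)})
           * real (2 * k choose k)
         \<le> (if \<Phi> (FFs A \<sigma> (blk n k) k i) then real (card (FFs A \<sigma> (blk n k) k i)) * fact (2 * k) else 0)"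
proof -
  define F where "F = FFs A \<sigma> (blk n k) k i"
  define K where "K = {\<kappa>\<in>{\<kappa>. \<kappa> permutes blk n k}. (\<sigma> \<circ> \<kappa>) ` {1..i} \<in> A \<and> \<Phi> (FFs A (\<sigma> \<circ> \<kappa>) (blk n k) k i)}"
  have Keq: "K = {\<kappa>. \<kappa> permutes blk n k \<and> (\<sigma> \<circ> \<kappa>) ` {1..i} \<in> A \<and> \<Phi> F}"
  proof (intro set_eqI)
    fix \<kappa>
    show "\<kappa> \<in> K \<longleftrightarrow> \<kappa> \<in> {\<kappa>. \<kappa> permutes blk n k \<and> (\<sigma> \<circ> \<kappa>) ` {1..i} \<in> A \<and> \<Phi> F}"
    proof (cases "\<kappa> permutes blk n k")
      case True
      then have "FFs A (\<sigma> \<circ> \<kappa>) (blk n k) k i = F" unfolding F_def by (rule FFs_inv[OF _ i])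
      then show ?thesis unfolding K_def using True by simp
    next
      case False then show ?thesis unfolding K_def by simp
    qed
  qed
  have finB: "finite (blk n k)" unfolding blk_def by simp
  have injs: "inj_on \<sigma> (blk n k)" using permutes_inj[OF \<sigma>] by (meson inj_on_subset subset_UNIV)
  show ?thesis
  proof (cases "\<Phi> F")
    case False
    then have "K = {}" using Keq by simp
    then have "real (card K) * real (2 * k choose k) \<le> (if \<Phi> F then real (card F) * fact (2 * k) else 0)"
      using False by simp
    then show ?thesis unfolding K_def F_def .
  next
    case True
    have sub: "K \<subseteq> {\<kappa>. \<kappa> permutes blk n k \<and> \<sigma> ` (\<kappa> ` {1..k}) \<in> F}"
    proof
      fix \<kappa> assume "\<kappa> \<in> K"
      then have kk: "\<kappa> permutes blk n k" "(\<sigma> \<circ> \<kappa>) ` {1..i} \<in> A" using Keq by auto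
      have s1: "\<kappa> ` {1..k} \<subseteq> blk n k" using permutes_image[OF kk(1)] unfolding blk_def by blast
      have "card (\<kappa> ` {1..k}) = k" using permutes_inj[OF kk(1)] by (simp add: card_image inj_on_subset)
      then have "card (\<sigma> ` (\<kappa> ` {1..k})) = k" using card_image[OF inj_on_subset[OF injs s1]] by simp
      moreover have "\<sigma> ` (\<kappa> ` {1..k}) \<subseteq> \<sigma> ` blk n k" using s1 by blast
      moreover have "\<sigma> ` {Suc k..i} \<union> \<sigma> ` (\<kappa> ` {1..k}) \<in> A"
        using kk(2) chain_split[OF kk(1) i, of \<sigma>] by (simp add: Un_commute)
      ultimately show "\<kappa> \<in> {\<kappa>. \<kappa> permutes blk n k \<and> \<sigma> ` (\<kappa> ` {1..k}) \<in> F}"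
        using kk(1) unfolding F_def FFs_def by simp
    qed
    define M where "M = {\<kappa>. \<kappa> permutes blk n k \<and> \<sigma> ` (\<kappa> ` {1..k}) \<in> F}"
    have fin: "finite M" unfolding M_def
      by (rule finite_subset[OF _ finite_permutations[OF finB]]) blast
    have cb: "card (blk n k) = 2 * k" by (rule blk_card[OF k])
    have ck: "card {1..k} = k" by simp
    have pc: "card M * (card (blk n k) choose card {1..k}) = card F * fact (card (blk n k))"
      unfolding M_def
    proof (rule perm_count2[OF finB _ injs])
      show "{1..k} \<subseteq> blk n k" unfolding blk_def by (rule Un_upper1)
      show "F \<subseteq> {X. X \<subseteq> \<sigma> ` blk n k \<and> card X = card {1..k}}" unfolding F_def FFs_def by auto
    qed
    have pc2: "card M * (2 * k choose k) = card F * fact (2 * k)"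
      using pc unfolding cb ck .
    have cm: "card K \<le> card M" unfolding M_def by (rule card_mono[OF fin[unfolded M_def] sub])
    have "card K * (2 * k choose k) \<le> card M * (2 * k choose k)" by (rule mult_le_mono1[OF cm])
    then have "card K * (2 * k choose k) \<le> card F * fact (2 * k)" unfolding pc2 .
    then have "real (card K * (2 * k choose k)) \<le> real (card F * fact (2 * k))"
      by (simp only: of_nat_le_iff)
    then have "real (card K) * real (2 * k choose k) \<le> real (card F) * fact (2 * k)"
      by (simp only: of_nat_mult of_nat_fact)
    then have "real (card K) * real (2 * k choose k) \<le> (if \<Phi> F then real (card F) * fact (2 * k) else 0)"
      using True by simp
    then show ?thesis unfolding K_def F_def .
  qed
qed

lemma bad_global:
  fixes \<beta> :: real
  assumes k: "2 * k \<le> n" and i: "k \<le> i" "i \<le> n - k" and b0: "\<beta> \<ge> 0"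
    and hPhi: "\<And>\<sigma>. \<sigma> permutes {1..n} \<Longrightarrow> \<Phi> (FFs A \<sigma> (blk n k) k i) \<Longrightarrow>
                 real (card (FFs A \<sigma> (blk n k) k i)) \<le> \<beta> * real (2 * k choose k)"
  shows "real (card {\<sigma>\<in>{\<sigma>. \<sigma> permutes {1..n}}. \<sigma> ` {1..i} \<in> A \<and> \<Phi> (FFs A \<sigma> (blk n k) k i)})
          \<le> \<beta> * fact n"
proof -
  have finB: "finite (blk n k)" unfolding blk_def by simp
  have cK: "card {\<kappa>. \<kappa> permutes blk n k} = fact (2 * k)"
    using card_permutations[OF blk_card[OF k] finB] .
  have "real (card {\<sigma>\<in>{\<sigma>. \<sigma> permutes {1..n}}. \<sigma> ` {1..i} \<in> A \<and> \<Phi> (FFs A \<sigma> (blk n k) k i)})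
          \<le> \<beta> * real (card {\<sigma>. \<sigma> permutes {1..n}})"
  proof (rule orbit_avg)
    show "finite {\<sigma>. \<sigma> permutes {1..n}}" by (rule finite_permutations) simp
    show "finite {\<kappa>. \<kappa> permutes blk n k}" by (rule finite_permutations[OF finB])
    show "{\<kappa>. \<kappa> permutes blk n k} \<noteq> {}" using permutes_id by blast
    show "bij_betw (\<lambda>\<sigma>. \<sigma> \<circ> \<kappa>) {\<sigma>. \<sigma> permutes {1..n}} {\<sigma>. \<sigma> permutes {1..n}}"
      if "\<kappa> \<in> {\<kappa>. \<kappa> permutes blk n k}" for \<kappa>
    proof -
      have "blk n k \<subseteq> {1..n}" using k by (intro blk_sub) simp
      then show ?thesis using that by (intro perm_right_bij) (auto intro: permutes_subset)
    qed
    fix \<sigma> assume \<sigma>: "\<sigma> \<in> {\<sigma>. \<sigma> permutes {1..n}}"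
    have bl: "real (card {\<kappa>\<in>{\<kappa>. \<kappa> permutes blk n k}. (\<sigma> \<circ> \<kappa>) ` {1..i} \<in> A \<and> \<Phi> (FFs A (\<sigma> \<circ> \<kappa>) (blk n k) k i)})
           * real (2 * k choose k)
         \<le> (if \<Phi> (FFs A \<sigma> (blk n k) k i) then real (card (FFs A \<sigma> (blk n k) k i)) * fact (2 * k) else 0)"
      using bad_local[OF _ k i] \<sigma> by simp
    also have "\<dots> \<le> \<beta> * real (2 * k choose k) * fact (2 * k)"
      using hPhi[of \<sigma>] \<sigma> b0 by (auto intro: mult_right_mono)
    finally have "real (card {\<kappa>\<in>{\<kappa>. \<kappa> permutes blk n k}. (\<sigma> \<circ> \<kappa>) ` {1..i} \<in> A \<and> \<Phi> (FFs A (\<sigma> \<circ> \<kappa>) (blk n k) k i)})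
           * real (2 * k choose k) \<le> (\<beta> * fact (2 * k)) * real (2 * k choose k)" by (simp add: algebra_simps)
    moreover have "real (2 * k choose k) > 0" by simp
    ultimately have "real (card {\<kappa>\<in>{\<kappa>. \<kappa> permutes blk n k}. (\<sigma> \<circ> \<kappa>) ` {1..i} \<in> A \<and> \<Phi> (FFs A (\<sigma> \<circ> \<kappa>) (blk n k) k i)})
           \<le> \<beta> * fact (2 * k)" by (meson mult_le_cancel_right_pos)
    then show "real (card {\<kappa>\<in>{\<kappa>. \<kappa> permutes blk n k}. (\<sigma> \<circ> \<kappa>) ` {1..i} \<in> A \<and> \<Phi> (FFs A (\<sigma> \<circ> \<kappa>) (blk n k) k i)})
           \<le> \<beta> * real (card {\<kappa>. \<kappa> permutes blk n k})" using cK by simp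
  qed
  also have "card {\<sigma>. \<sigma> permutes {1..n}} = fact n" using card_permutations[of "{1..n}" n] by simp
  finally show ?thesis by simp
qed

lemma layer_count:
  assumes A: "A \<subseteq> Pow {1..n}" and i: "i \<le> n"
  shows "real (card {\<sigma>\<in>{\<sigma>. \<sigma> permutes {1..n}}. \<sigma> ` {1..i} \<in> A}) * real (n choose i)
         = real (card {X\<in>A. card X = i}) * fact n"
proof -
  have "card {\<kappa>. \<kappa> permutes {1..n} \<and> id ` (\<kappa> ` {1..i}) \<in> {X\<in>A. card X = i}} * (card {1..n} choose card {1..i})
        = card {X\<in>A. card X = i} * fact (card {1..n})"
    by (rule perm_count2) (use A i in auto)
  moreover have "{\<kappa>. \<kappa> permutes {1..n} \<and> id ` (\<kappa> ` {1..i}) \<in> {X\<in>A. card X = i}}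
      = {\<sigma>\<in>{\<sigma>. \<sigma> permutes {1..n}}. \<sigma> ` {1..i} \<in> A}"
  proof (intro set_eqI iffI)
    fix \<sigma> assume "\<sigma> \<in> {\<sigma>\<in>{\<sigma>. \<sigma> permutes {1..n}}. \<sigma> ` {1..i} \<in> A}"
    then have "\<sigma> permutes {1..n}" "\<sigma> ` {1..i} \<in> A" by auto
    moreover have "card (\<sigma> ` {1..i}) = i" using permutes_inj[OF calculation(1)] by (simp add: card_image inj_on_subset)
    ultimately show "\<sigma> \<in> {\<kappa>. \<kappa> permutes {1..n} \<and> id ` (\<kappa> ` {1..i}) \<in> {X\<in>A. card X = i}}" by simp
  qed auto
  moreover have "card {1..n} = n" "card {1..i} = i" by simp_all
  ultimately have "card {\<sigma>\<in>{\<sigma>. \<sigma> permutes {1..n}}. \<sigma> ` {1..i} \<in> A} * (n choose i) = card {X\<in>A. card X = i} * fact n"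
    by simp
  then have "real (card {\<sigma>\<in>{\<sigma>. \<sigma> permutes {1..n}}. \<sigma> ` {1..i} \<in> A} * (n choose i)) = real (card {X\<in>A. card X = i} * fact n)"
    by (simp only:)
  then show ?thesis by (simp only: of_nat_mult of_nat_fact)
qed

definition good :: "nat set set \<Rightarrow> nat \<Rightarrow> nat \<Rightarrow> nat \<Rightarrow> real \<Rightarrow> (nat \<Rightarrow> nat) \<Rightarrow> nat \<Rightarrow> bool" where
  "good A n g h d \<sigma> i \<longleftrightarrow> \<sigma> ` {1..i} \<in> A \<and>
     1 / real n * real (2 * g choose g) \<le> real (card (FFs A \<sigma> (blk n g) g i)) \<and>
     1 / real n * real (2 * h choose h) \<le> real (card (core d (FFs A \<sigma> (blk n h) h i)))"

lemma good_count:
  assumes n: "n \<ge> 1" and gh: "g \<le> h" and h1: "1 \<le> h" and hn: "2 * h \<le> n" and d0: "d \<ge> 0"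
    and i: "h \<le> i" "i \<le> n - h"
  shows "real (card {\<sigma>\<in>{\<sigma>. \<sigma> permutes {1..n}}. \<sigma> ` {1..i} \<in> A})
     \<le> real (card {\<sigma>\<in>{\<sigma>. \<sigma> permutes {1..n}}. good A n g h d \<sigma> i})
       + (2 / real n + (2 * d + real h) / real h ^ 2) * fact n"
proof -
  let ?G = "{\<sigma>. \<sigma> permutes {1..n}}"
  define B3 where "B3 = {\<sigma>\<in>?G. \<sigma> ` {1..i} \<in> A \<and> (\<lambda>F. real (card F) < 1 / real n * real (2 * g choose g)) (FFs A \<sigma> (blk n g) g i)}"
  define B4 where "B4 = {\<sigma>\<in>?G. \<sigma> ` {1..i} \<in> A \<and> (\<lambda>F. real (card (core d F)) < 1 / real n * real (2 * h choose h)) (FFs A \<sigma> (blk n h) h i)}"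
  have finG: "finite ?G" by (rule finite_permutations) simp
  have b3: "real (card B3) \<le> 1 / real n * fact n"
    unfolding B3_def
  proof (rule bad_global)
    show "2 * g \<le> n" "g \<le> i" "i \<le> n - g" using gh hn i by auto
    show "0 \<le> 1 / real n" by simp
    fix \<sigma> assume "real (card (FFs A \<sigma> (blk n g) g i)) < 1 / real n * real (2 * g choose g)"
    then show "real (card (FFs A \<sigma> (blk n g) g i)) \<le> 1 / real n * real (2 * g choose g)" by simp
  qed
  have b4: "real (card B4) \<le> (1 / real n + (2 * d + real h) / real h ^ 2) * fact n"
    unfolding B4_def
  proof (rule bad_global)
    show "2 * h \<le> n" "h \<le> i" "i \<le> n - h" using hn i by auto
    show "0 \<le> 1 / real n + (2 * d + real h) / real h ^ 2" using d0 by simp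
    fix \<sigma> assume \<sigma>: "\<sigma> permutes {1..n}"
      and c: "real (card (core d (FFs A \<sigma> (blk n h) h i))) < 1 / real n * real (2 * h choose h)"
    have finT: "finite (\<sigma> ` blk n h)" unfolding blk_def by simp
    have cT: "card (\<sigma> ` blk n h) = 2 * h"
      using blk_card[OF hn] permutes_inj[OF \<sigma>] by (simp add: card_image inj_on_subset)
    have "real (card (FFs A \<sigma> (blk n h) h i)) \<le> real (card (core d (FFs A \<sigma> (blk n h) h i)))
       + real (card (\<sigma> ` blk n h) choose (h - 1)) * (2 * d + real h) / real h ^ 2"
      by (rule core_big[OF finT h1 d0]) (auto simp: FFs_def)
    also have "real (card (\<sigma> ` blk n h) choose (h - 1)) * (2 * d + real h) / real h ^ 2
        \<le> real (2 * h choose h) * (2 * d + real h) / real h ^ 2"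
    proof -
      have "real (card (\<sigma> ` blk n h) choose (h - 1)) \<le> real (2 * h choose h)"
        using cT binomial_maximum'[of h "h-1"] by simp
      then show ?thesis using d0 by (intro divide_right_mono mult_right_mono) auto
    qed
    finally have "real (card (FFs A \<sigma> (blk n h) h i)) \<le> real (card (core d (FFs A \<sigma> (blk n h) h i)))
       + real (2 * h choose h) * (2 * d + real h) / real h ^ 2" by simp
    then show "real (card (FFs A \<sigma> (blk n h) h i)) \<le> (1 / real n + (2 * d + real h) / real h ^ 2) * real (2 * h choose h)"
      using c by (simp add: algebra_simps)
  qed
  have "{\<sigma>\<in>?G. \<sigma> ` {1..i} \<in> A} \<subseteq> {\<sigma>\<in>?G. good A n g h d \<sigma> i} \<union> B3 \<union> B4"
    unfolding B3_def B4_def good_def by auto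
  then have "card {\<sigma>\<in>?G. \<sigma> ` {1..i} \<in> A} \<le> card ({\<sigma>\<in>?G. good A n g h d \<sigma> i} \<union> B3 \<union> B4)"
    using finG by (intro card_mono) (auto simp: B3_def B4_def)
  also have "\<dots> \<le> card ({\<sigma>\<in>?G. good A n g h d \<sigma> i} \<union> B3) + card B4" by (rule card_Un_le)
  also have "\<dots> \<le> card {\<sigma>\<in>?G. good A n g h d \<sigma> i} + card B3 + card B4"
    using card_Un_le[of "{\<sigma>\<in>?G. good A n g h d \<sigma> i}" B3] by simp
  finally have "real (card {\<sigma>\<in>?G. \<sigma> ` {1..i} \<in> A}) \<le> real (card {\<sigma>\<in>?G. good A n g h d \<sigma> i}) + real (card B3) + real (card B4)"
    by linarith
  moreover have "(2 / real n + (2 * d + real h) / real h ^ 2) * fact n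
      = 1 / real n * fact n + (1 / real n + (2 * d + real h) / real h ^ 2) * fact n"
  proof -
    have "2 / real n = 2 * (1 / real n)" by simp
    then show ?thesis by (simp only:) (simp add: algebra_simps)
  qed
  ultimately show ?thesis using b3 b4 by linarith
qed

lemma exists_ge_avg:
  fixes f :: "'b \<Rightarrow> real"
  assumes "finite G" "G \<noteq> {}" "(\<Sum>\<sigma>\<in>G. f \<sigma>) \<ge> real (card G) * M"
  shows "\<exists>\<sigma>\<in>G. f \<sigma> \<ge> M"
proof (rule ccontr)
  assume "\<not> ?thesis"
  then have "\<forall>\<sigma>\<in>G. f \<sigma> < M" by auto
  then have "(\<Sum>\<sigma>\<in>G. f \<sigma>) < (\<Sum>\<sigma>\<in>G. M)" using assms by (intro sum_strict_mono) auto
  then show False using assms by simp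
qed

lemma binom_sum_sub:
  assumes "W \<subseteq> {0..n}"
  shows "(\<Sum>i\<in>W. real (n choose i)) \<le> 2 ^ n"
proof -
  have "(\<Sum>i\<in>W. real (n choose i)) \<le> (\<Sum>i\<in>{0..n}. real (n choose i))"
    using assms by (intro sum_mono2) auto
  also have "\<dots> = real (\<Sum>i\<le>n. n choose i)" by (simp add: atLeast0AtMost)
  also have "\<dots> = 2 ^ n" by (simp add: choose_row_sum)
  finally show ?thesis .
qed

lemma main_avg:
  assumes n: "n \<ge> 1" and gh: "g \<le> h" and h1: "1 \<le> h" and hn: "2 * h \<le> n" and d0: "d \<ge> 0"
    and A: "A \<subseteq> Pow {1..n}"
  shows "\<exists>\<sigma>. \<sigma> permutes {1..n} \<and>
     (\<Sum>i\<in>{i\<in>{h..n-h}. good A n g h d \<sigma> i}. real (n choose i))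
       \<ge> (\<Sum>i\<in>{h..n-h}. real (card {X\<in>A. card X = i})) - (2 / real n + (2 * d + real h) / real h ^ 2) * 2 ^ n"
proof -
  let ?G = "{\<sigma>. \<sigma> permutes {1..n}}"
  let ?W = "{h..n-h}"
  let ?c = "2 / real n + (2 * d + real h) / real h ^ 2"
  have finG: "finite ?G" by (rule finite_permutations) simp
  have Gne: "?G \<noteq> {}" using permutes_id by blast
  have cG: "card ?G = fact n" using card_permutations[of "{1..n}" n] by simp
  have c0: "?c \<ge> 0" using d0 by simp
  have "(\<Sum>\<sigma>\<in>?G. \<Sum>i\<in>{i\<in>?W. good A n g h d \<sigma> i}. real (n choose i))
      = (\<Sum>\<sigma>\<in>?G. \<Sum>i\<in>?W. if good A n g h d \<sigma> i then real (n choose i) else 0)"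
    by (rule sum.cong[OF refl], rule sum.inter_filter) simp
  also have "\<dots> = (\<Sum>i\<in>?W. \<Sum>\<sigma>\<in>?G. if good A n g h d \<sigma> i then real (n choose i) else 0)"
    by (rule sum.swap)
  also have "\<dots> = (\<Sum>i\<in>?W. real (n choose i) * real (card {\<sigma>\<in>?G. good A n g h d \<sigma> i}))"
    using finG by (simp add: sum.If_cases Int_def mult.commute)
  also have "\<dots> \<ge> (\<Sum>i\<in>?W. real (n choose i) * (real (card {\<sigma>\<in>?G. \<sigma> ` {1..i} \<in> A}) - ?c * fact n))"
  proof (rule sum_mono)
    fix i assume "i \<in> ?W"
    then have i: "h \<le> i" "i \<le> n - h" by auto
    show "real (n choose i) * (real (card {\<sigma>\<in>?G. \<sigma> ` {1..i} \<in> A}) - ?c * fact n)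
       \<le> real (n choose i) * real (card {\<sigma>\<in>?G. good A n g h d \<sigma> i})"
      using good_count[OF n gh h1 hn d0 i, of A] by (intro mult_left_mono) auto
  qed
  also have "(\<Sum>i\<in>?W. real (n choose i) * (real (card {\<sigma>\<in>?G. \<sigma> ` {1..i} \<in> A}) - ?c * fact n))
     = (\<Sum>i\<in>?W. real (card {X\<in>A. card X = i}) * fact n - real (n choose i) * ?c * fact n)"
  proof (rule sum.cong[OF refl])
    fix i assume "i \<in> ?W"
    then have "i \<le> n" by auto
    from layer_count[OF A this] show "real (n choose i) * (real (card {\<sigma>\<in>?G. \<sigma> ` {1..i} \<in> A}) - ?c * fact n)
      = real (card {X\<in>A. card X = i}) * fact n - real (n choose i) * ?c * fact n"
      by (simp add: algebra_simps)
  qed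
  also have "\<dots> = (\<Sum>i\<in>?W. real (card {X\<in>A. card X = i})) * fact n - (\<Sum>i\<in>?W. real (n choose i)) * (?c * fact n)"
    by (simp only: sum_subtractf sum_distrib_right mult.assoc)
  also have "\<dots> = fact n * ((\<Sum>i\<in>?W. real (card {X\<in>A. card X = i})) - ?c * (\<Sum>i\<in>?W. real (n choose i)))"
    by (simp only: right_diff_distrib mult.commute mult.left_commute)
  finally have main1: "(\<Sum>\<sigma>\<in>?G. \<Sum>i\<in>{i\<in>?W. good A n g h d \<sigma> i}. real (n choose i))
     \<ge> fact n * ((\<Sum>i\<in>?W. real (card {X\<in>A. card X = i})) - ?c * (\<Sum>i\<in>?W. real (n choose i)))" .
  have "?c * (\<Sum>i\<in>?W. real (n choose i)) \<le> ?c * 2 ^ n"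
    using binom_sum_sub[of ?W n] c0 by (intro mult_left_mono) auto
  have "(\<Sum>\<sigma>\<in>?G. \<Sum>i\<in>{i\<in>?W. good A n g h d \<sigma> i}. real (n choose i))
     \<ge> real (card ?G) * ((\<Sum>i\<in>?W. real (card {X\<in>A. card X = i})) - ?c * 2 ^ n)"
  proof -
    have m1: "fact n * ((\<Sum>i\<in>?W. real (card {X\<in>A. card X = i})) - ?c * 2 ^ n)
       \<le> fact n * ((\<Sum>i\<in>?W. real (card {X\<in>A. card X = i})) - ?c * (\<Sum>i\<in>?W. real (n choose i)))"
      using \<open>?c * (\<Sum>i\<in>?W. real (n choose i)) \<le> ?c * 2 ^ n\<close> by (intro mult_left_mono) (linarith, simp)
    show ?thesis unfolding cG using order_trans[OF m1 main1] by simp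
  qed
  from exists_ge_avg[OF finG Gne this] show ?thesis by auto
qed

lemma binom_tail_low:
  assumes n: "n > 0" and e: "e \<ge> 0"
  shows "(\<Sum>i\<in>{i. real i \<le> real n / 2 - e}. real (n choose i)) \<le> 2^n * exp (-2 * e\<^sup>2 / n)"
proof -
  interpret binomial_distribution n "1/2" by unfold_locales auto
  have fin: "finite {i::nat. real i \<le> real n / 2 - e}"
  proof (rule finite_subset[of _ "{..n}"])
    show "{i::nat. real i \<le> real n / 2 - e} \<subseteq> {..n}"
    proof
      fix x assume "x \<in> {i::nat. real i \<le> real n / 2 - e}"
      then have "real x \<le> real n" using e by simp
      then show "x \<in> {..n}" by simp
    qed
  qed auto
  have "measure_pmf.prob (binomial_pmf n (1/2)) {x. real x \<le> real n * (1/2) - e} \<le> exp (-2 * e\<^sup>2 / n)"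
    using prob_le[OF n e] by simp
  moreover have "measure_pmf.prob (binomial_pmf n (1/2)) {x. real x \<le> real n * (1/2) - e}
      = (\<Sum>i\<in>{i. real i \<le> real n / 2 - e}. real (n choose i)) / 2^n"
  proof -
    have "measure_pmf.prob (binomial_pmf n (1/2)) {x. real x \<le> real n * (1/2) - e}
       = (\<Sum>i\<in>{i. real i \<le> real n / 2 - e}. pmf (binomial_pmf n (1/2)) i)"
      using fin by (subst measure_measure_pmf_finite) auto
    also have "\<dots> = (\<Sum>i\<in>{i. real i \<le> real n / 2 - e}. real (n choose i) / 2^n)"
    proof (rule sum.cong[OF refl])
      fix i assume "i \<in> {i. real i \<le> real n / 2 - e}"
      show "pmf (binomial_pmf n (1/2)) i = real (n choose i) / 2^n"
      proof (cases "i \<le> n")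
        case True
        have "(1/2::real)^i * (1 - 1/2)^(n-i) = (1/2)^(i + (n-i))" by (simp add: power_add)
        also have "i + (n-i) = n" using True by simp
        finally show ?thesis by (simp add: power_divide)
      next
        case False then show ?thesis by (simp add: binomial_eq_0)
      qed
    qed
    also have "\<dots> = (\<Sum>i\<in>{i. real i \<le> real n / 2 - e}. real (n choose i)) / 2^n"
      by (simp add: sum_divide_distrib)
    finally show ?thesis .
  qed
  ultimately show ?thesis by (simp add: divide_le_eq mult.commute)
qed


lemma card_layers:
  assumes A: "A \<subseteq> Pow {1..n}"
  shows "real (card A) = (\<Sum>i\<in>{0..n}. real (card {X\<in>A. card X = i}))"
proof -
  have finA: "finite A" using A by (metis finite_Pow_iff finite_atLeastAtMost finite_subset)
  have "A = (\<Union>i\<in>{0..n}. {X\<in>A. card X = i})"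
  proof (intro set_eqI iffI)
    fix X assume "X \<in> A"
    then have "X \<subseteq> {1..n}" using A by auto
    then have "card X \<le> n" using card_mono[of "{1..n}" X] by simp
    then show "X \<in> (\<Union>i\<in>{0..n}. {X\<in>A. card X = i})" using \<open>X \<in> A\<close> by auto
  qed auto
  then have "card A = card (\<Union>i\<in>{0..n}. {X\<in>A. card X = i})" by simp
  also have "\<dots> = (\<Sum>i\<in>{0..n}. card {X\<in>A. card X = i})"
    by (rule card_UN_disjoint) (use finA in auto)
  finally show ?thesis by simp
qed

lemma layer_le:
  assumes A: "A \<subseteq> Pow {1..n}"
  shows "real (card {X\<in>A. card X = i}) \<le> real (n choose i)"
proof -
  have "card {X\<in>A. card X = i} \<le> card {X. X \<subseteq> {1..n} \<and> card X = i}"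
    using A by (intro card_mono) auto
  also have "\<dots> = n choose i" using n_subsets[of "{1..n}" i] by simp
  finally show ?thesis by simp
qed

lemma layers_tail:
  assumes A: "A \<subseteq> Pow {1..n}" and hn: "2 * h \<le> n" and n: "n \<ge> 1" and e: "e \<ge> 0"
    and he: "real h \<le> real n / 2 - e"
  shows "(\<Sum>i\<in>{h..n-h}. real (card {X\<in>A. card X = i})) \<ge> real (card A) - 2 * 2 ^ n * exp (-2 * e\<^sup>2 / n)"
proof -
  let ?a = "\<lambda>i. real (card {X\<in>A. card X = i})"
  let ?b = "\<lambda>i. real (n choose i)"
  have "(\<Sum>i\<in>{0..n}. ?a i) = (\<Sum>i\<in>{0..n}-{h..n-h}. ?a i) + (\<Sum>i\<in>{h..n-h}. ?a i)"
    by (rule sum.subset_diff) auto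
  then have split: "(\<Sum>i\<in>{0..n}. ?a i) = (\<Sum>i\<in>{h..n-h}. ?a i) + (\<Sum>i\<in>{0..n}-{h..n-h}. ?a i)"
    by simp
  have "(\<Sum>i\<in>{0..n}-{h..n-h}. ?a i) \<le> (\<Sum>i\<in>{0..n}-{h..n-h}. ?b i)"
    by (rule sum_mono) (rule layer_le[OF A])
  also have "\<dots> \<le> (\<Sum>i\<in>{..<h} \<union> {n-h<..n}. ?b i)"
    by (rule sum_mono2) auto
  also have "\<dots> = (\<Sum>i\<in>{..<h}. ?b i) + (\<Sum>i\<in>{n-h<..n}. ?b i)"
    by (rule sum.union_disjoint) (use hn in auto)
  also have "(\<Sum>i\<in>{n-h<..n}. ?b i) = (\<Sum>i\<in>{..<h}. ?b i)"
  proof (rule sum.reindex_bij_witness[of _ "\<lambda>j. n - j" "\<lambda>i. n - i"])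
    fix i assume "i \<in> {n-h<..n}" then show "n - (n - i) = i" "n - i \<in> {..<h}" using hn by auto
  next
    fix j assume "j \<in> {..<h}" then show "n - (n - j) = j" "n - j \<in> {n-h<..n}" using hn by auto
  next
    fix i assume "i \<in> {n-h<..n}" then show "?b (n - i) = ?b i" by (simp add: binomial_symmetric[symmetric])
  qed
  also have "(\<Sum>i\<in>{..<h}. ?b i) \<le> (\<Sum>i\<in>{i. real i \<le> real n / 2 - e}. ?b i)"
  proof (rule sum_mono2)
    show "finite {i::nat. real i \<le> real n / 2 - e}"
    proof (rule finite_subset[of _ "{..n}"])
      show "{i::nat. real i \<le> real n / 2 - e} \<subseteq> {..n}"
      proof
        fix x assume "x \<in> {i::nat. real i \<le> real n / 2 - e}"
        then have "real x \<le> real n" using e by simp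
        then show "x \<in> {..n}" by simp
      qed
    qed auto
    show "{..<h} \<subseteq> {i. real i \<le> real n / 2 - e}" using he by auto
  qed auto
  also have "\<dots> \<le> 2^n * exp (-2 * e\<^sup>2 / n)" using binom_tail_low[of n e] n e by simp
  finally have "(\<Sum>i\<in>{0..n}-{h..n-h}. ?a i) \<le> 2 * 2 ^ n * exp (-2 * e\<^sup>2 / n)" by simp
  then show ?thesis using split card_layers[OF A] by simp
qed


lemma numeric:
  fixes n :: nat and h :: real
  assumes n: "n \<ge> 1" and h: "h \<ge> real n / 4"
  shows "2 / real n ^ 2 + 2 / real n + (2 * real n powr (4/3) + h) / h ^ 2 \<le> 2 ^ 10 / real n powr (2/3)"
proof -
  define p where "p = real n powr (2/3)"
  define N where "N = real n"
  have n1: "N \<ge> 1" using n by (simp add: N_def)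
  have h0: "h > 0" using h n1 unfolding N_def by linarith
  have p0: "p > 0" unfolding p_def using n by simp
  have pn: "p \<le> N" unfolding p_def N_def using n1 powr_mono[of "2/3" 1 "real n"] by (simp add: N_def)
  have dp: "real n powr (4/3) * p = N ^ 2"
  proof -
    have "real n powr (4/3) * p = real n powr (4/3 + 2/3)" unfolding p_def by (rule powr_add[symmetric])
    also have "(4/3 + 2/3 :: real) = 2" by simp
    also have "real n powr 2 = N ^ 2" unfolding N_def using n by (simp add: powr_numeral)
    finally show ?thesis .
  qed
  have hh: "h ^ 2 \<ge> N ^ 2 / 16"
  proof -
    have "(N / 4) ^ 2 \<le> h ^ 2" using h n1 unfolding N_def by (intro power_mono) auto
    then show ?thesis by (simp add: power_divide)
  qed
  have t1: "2 * real n powr (4/3) / h ^ 2 \<le> 32 / p"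
  proof -
    have "2 * real n powr (4/3) / h ^ 2 \<le> 2 * real n powr (4/3) / (N ^ 2 / 16)"
      using hh n1 h0 by (intro divide_left_mono) auto
    also have "\<dots> = 32 * (real n powr (4/3) * p) / (N ^ 2 * p)" using p0 n1 by (simp add: field_simps)
    also have "\<dots> = 32 / p" using dp n1 p0 by simp
    finally show ?thesis .
  qed
  have t2: "h / h ^ 2 \<le> 4 / p"
  proof -
    have "h / h ^ 2 = 1 / h" using h0 by (simp add: power2_eq_square)
    also have "\<dots> \<le> 4 / N" using h h0 n1 unfolding N_def by (simp add: field_simps)
    also have "\<dots> \<le> 4 / p" using pn p0 by (intro divide_left_mono) auto
    finally show ?thesis .
  qed
  have t3: "2 / N \<le> 2 / p" using pn p0 by (intro divide_left_mono) auto
  have t4: "2 / N ^ 2 \<le> 2 / p"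
  proof -
    have "N \<le> N ^ 2" using n1 by (simp add: power2_eq_square)
    then show ?thesis using pn p0 by (intro divide_left_mono) auto
  qed
  have "(2 * real n powr (4/3) + h) / h ^ 2 = 2 * real n powr (4/3) / h ^ 2 + h / h ^ 2"
    by (simp add: add_divide_distrib)
  then have "2 / N ^ 2 + 2 / N + (2 * real n powr (4/3) + h) / h ^ 2 \<le> 40 / p"
    using t1 t2 t3 t4 by simp
  also have "\<dots> \<le> 2 ^ 10 / p" using p0 by (intro divide_right_mono) auto
  finally show ?thesis unfolding N_def p_def .
qed


lemma E1: "eventually (\<lambda>n::nat. real n / 2 \<ge> 2 * sqrt (real n * ln (real n)) + 2) at_top"
  by real_asymp
lemma E2: "eventually (\<lambda>n::nat. 2 * real n powr (3/5) \<le> real n / 4) at_top"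
  by real_asymp

lemma inter_blk: "g \<le> i \<Longrightarrow> i \<le> n - g \<Longrightarrow> {1..i} \<inter> blk n g = {1..g}"
  unfolding blk_def by auto

lemma diff_seg: "g \<le> i \<Longrightarrow> {1..i} - {1..g} = {Suc g..i}"
  by auto

lemma lemma2_fixed:
  fixes n :: nat
  assumes E1n: "real n / 2 \<ge> 2 * sqrt (real n * ln (real n)) + 2"
    and E2n: "2 * real n powr (3/5) \<le> real n / 4"
    and A: "\<A> \<subseteq> Pow {1..n}"
  shows "(let s = s_par n; t = t_par n in
     \<exists>S T C I.
       S \<subseteq> T \<and> T \<subseteq> {1..n} \<and> card S = s \<and> card T = t \<and>
       max_chain n C \<and> I \<subseteq> {0..n} \<and>
       (\<forall>i\<in>I. C i \<in> \<A>) \<and>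
       (\<Sum>i\<in>I. real (n choose i)) \<ge> real (card \<A>) - 2^10 / real n powr (2/3) * 2^n \<and>
       (\<exists>F0. F0 \<subseteq> S \<and> card F0 = s div 2 \<and>
          (\<forall>i\<in>I. C i \<inter> S = F0 \<and> i \<ge> s div 2) \<and>
          (\<forall>i\<in>I. \<exists>\<F>. \<F> \<subseteq> {F. F \<subseteq> S \<and> card F = s div 2} \<and>
                real (card \<F>) \<ge> 1 / real n * real (s choose (s div 2)) \<and>
                (\<forall>F\<in>\<F>. (C i - F0) \<union> F \<in> \<A>))) \<and>
       (\<exists>D0. D0 \<subseteq> T \<and> card D0 = t div 2 \<and>
          (\<forall>i\<in>I. C i \<inter> T = D0 \<and> i \<ge> t div 2) \<and>
          (\<forall>i\<in>I. \<exists>\<D>. \<D> \<subseteq> {D. D \<subseteq> T \<and> card D = t div 2} \<and>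
                real (card \<D>) \<ge> 1 / real n * real (t choose (t div 2)) \<and>
                (\<forall>D\<in>\<D>. (C i - D0) \<union> D \<in> \<A>) \<and>
                (\<forall>D\<in>\<D>. real (card {D'\<in>\<D>. neighbours D D'}) \<ge> real n powr (4/3)))))"
proof -
  define x where "x = (real n - 2 * sqrt (real n * ln (real n))) / 2"
  define h where "h = nat \<lfloor>x\<rfloor>"
  define g where "g = nat \<lfloor>2 * real n powr (3/5)\<rfloor>"
  define d where "d = real n powr (4/3)"
  define e where "e = sqrt (real n * ln (real n))"
  have "real n * ln (real n) \<ge> 0" by (cases "n = 0") auto
  then have sq0: "sqrt (real n * ln (real n)) \<ge> 0" by simp
  have n4: "real n \<ge> 4" using E1n sq0 by linarith
  have n1: "n \<ge> 1" using n4 by simp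
  have xe: "x = real n / 2 - sqrt (real n * ln (real n))" unfolding x_def by (simp add: field_simps)
  have x1: "x \<ge> real n / 4 + 1" using E1n unfolding xe by linarith
  have fl: "real_of_int \<lfloor>x\<rfloor> > x - 1" "real_of_int \<lfloor>x\<rfloor> \<le> x" by linarith+
  have hx: "real h = real_of_int \<lfloor>x\<rfloor>" unfolding h_def using fl x1 n4 by simp
  have hge: "real h \<ge> real n / 4" using hx fl x1 by linarith
  have hle: "real h \<le> real n / 2 - e" using hx fl unfolding xe e_def by linarith
  have h1: "1 \<le> h" using hge n4 by linarith
  have e0: "e \<ge> 0" unfolding e_def using sq0 .
  have "real (2 * h) \<le> real n" using hle e0 by simp
  then have hn: "2 * h \<le> n" by (simp only: of_nat_le_iff)
  have g0: "real g \<le> 2 * real n powr (3/5)"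
  proof -
    have "0 \<le> 2 * real n powr (3/5)" by simp
    then have "real g = real_of_int \<lfloor>2 * real n powr (3/5)\<rfloor>" unfolding g_def by simp
    then show ?thesis by linarith
  qed
  have gh: "g \<le> h" using g0 E2n hge by linarith
  have d0: "d \<ge> 0" unfolding d_def by simp
  have sdef: "s_par n = 2 * g" unfolding s_par_def g_def by simp
  have tdef: "t_par n = 2 * h" unfolding t_par_def h_def x_def by simp
  obtain \<sigma> where \<sigma>: "\<sigma> permutes {1..n}"
    and sum: "(\<Sum>i\<in>{i\<in>{h..n-h}. good \<A> n g h d \<sigma> i}. real (n choose i))
       \<ge> (\<Sum>i\<in>{h..n-h}. real (card {X\<in>\<A>. card X = i})) - (2 / real n + (2 * d + real h) / real h ^ 2) * 2 ^ n"
    using main_avg[OF n1 gh h1 hn d0 A] by blast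
  define I where "I = {i\<in>{h..n-h}. good \<A> n g h d \<sigma> i}"
  define S where "S = \<sigma> ` blk n g"
  define T where "T = \<sigma> ` blk n h"
  define C where "C = (\<lambda>i. \<sigma> ` {1..i})"
  define F0 where "F0 = \<sigma> ` {1..g}"
  define D0 where "D0 = \<sigma> ` {1..h}"
  have inj: "inj \<sigma>" using permutes_inj[OF \<sigma>] .
  have gn: "2 * g \<le> n" using gh hn by simp
  have tail: "(\<Sum>i\<in>{h..n-h}. real (card {X\<in>\<A>. card X = i})) \<ge> real (card \<A>) - 2 * 2 ^ n * exp (-2 * e\<^sup>2 / n)"
    by (rule layers_tail[OF A hn n1 e0 hle])
  have ex: "exp (-2 * e\<^sup>2 / n) = 1 / real n ^ 2"
  proof -
    have ln0: "ln (real n) \<ge> 0" using n1 by simp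
    have "e\<^sup>2 = real n * ln (real n)" unfolding e_def using ln0 by simp
    then have "-2 * e\<^sup>2 / n = - (ln (real n) + ln (real n))" using n1 by simp
    have npos: "real n > 0" using n1 by simp
    have "exp (-2 * e\<^sup>2 / n) = exp (- (ln (real n) + ln (real n)))" using \<open>-2 * e\<^sup>2 / n = - (ln (real n) + ln (real n))\<close> by (simp only:)
    also have "\<dots> = inverse (exp (ln (real n) + ln (real n)))" by (rule exp_minus)
    also have "\<dots> = inverse (real n * real n)" by (simp only: exp_add exp_ln[OF npos])
    finally show ?thesis by (simp add: power2_eq_square divide_inverse)
  qed
  have num: "2 / real n ^ 2 + 2 / real n + (2 * d + real h) / real h ^ 2 \<le> 2 ^ 10 / real n powr (2/3)"
    unfolding d_def by (rule numeric[OF n1 hge])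
  have bound: "(\<Sum>i\<in>I. real (n choose i)) \<ge> real (card \<A>) - 2^10 / real n powr (2/3) * 2^n"
  proof -
    have "(\<Sum>i\<in>I. real (n choose i)) \<ge> real (card \<A>) - (2 / real n ^ 2 + (2 / real n + (2 * d + real h) / real h ^ 2)) * 2 ^ n"
      using sum tail ex unfolding I_def by (simp add: algebra_simps)
    moreover have "(2 / real n ^ 2 + (2 / real n + (2 * d + real h) / real h ^ 2)) * 2 ^ n \<le> 2^10 / real n powr (2/3) * 2^n"
      using num by (intro mult_right_mono) auto
    ultimately show ?thesis by linarith
  qed
  have Iprop: "i \<in> {h..n-h}" "good \<A> n g h d \<sigma> i" if "i \<in> I" for i using that unfolding I_def by auto
  have gn': "g \<le> n" "h \<le> n" using gn hn by auto
  have c_ST: "S \<subseteq> T" unfolding S_def T_def using blk_mono[OF gh gn'(2)] by (rule image_mono)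
  have c_T: "T \<subseteq> {1..n}" unfolding T_def using blk_sub[OF gn'(2)] permutes_image[OF \<sigma>] by blast
  have cS: "card S = 2 * g" unfolding S_def using blk_card[OF gn] inj by (simp add: card_image inj_on_subset)
  have cT: "card T = 2 * h" unfolding T_def using blk_card[OF hn] inj by (simp add: card_image inj_on_subset)
  have mc: "max_chain n C" unfolding max_chain_def C_def
  proof (intro conjI allI impI)
    fix i assume i: "i \<le> n"
    show "\<sigma> ` {1..i} \<subseteq> {1..n}" using i permutes_image[OF \<sigma>] by auto
    show "card (\<sigma> ` {1..i}) = i" using inj by (simp add: card_image inj_on_subset)
  next
    fix i show "\<sigma> ` {1..i} \<subseteq> \<sigma> ` {1..Suc i}" by (intro image_mono) auto
  qed
  have cI: "I \<subseteq> {0..n}" unfolding I_def by auto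
  have cA: "\<forall>i\<in>I. C i \<in> \<A>" using Iprop unfolding C_def good_def by blast
  have finF: "finite (FFs \<A> \<sigma> P k i)" if "finite P" for P k i
  proof -
    have "FFs \<A> \<sigma> P k i \<subseteq> Pow (\<sigma> ` P)" unfolding FFs_def by auto
    then show ?thesis using that by (meson finite_Pow_iff finite_imageI finite_subset)
  qed
  have finblk: "finite (blk n k)" for k unfolding blk_def by simp
  have partS: "\<exists>F0. F0 \<subseteq> S \<and> card F0 = g \<and>
          (\<forall>i\<in>I. C i \<inter> S = F0 \<and> i \<ge> g) \<and>
          (\<forall>i\<in>I. \<exists>\<F>. \<F> \<subseteq> {F. F \<subseteq> S \<and> card F = g} \<and>
                real (card \<F>) \<ge> 1 / real n * real (2 * g choose g) \<and>
                (\<forall>F\<in>\<F>. (C i - F0) \<union> F \<in> \<A>))"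
  proof (intro exI[of _ F0] conjI ballI)
    show "F0 \<subseteq> S" unfolding F0_def S_def blk_def by (intro image_mono) auto
    show "card F0 = g" unfolding F0_def using inj by (simp add: card_image inj_on_subset)
    fix i assume iI: "i \<in> I"
    have i: "h \<le> i" "i \<le> n - h" using Iprop(1)[OF iI] by auto
    have ig: "g \<le> i" "i \<le> n - g" using i gh by auto
    show "C i \<inter> S = F0" unfolding C_def S_def F0_def
      using image_Int[OF inj, of "{1..i}" "blk n g"] inter_blk[OF ig] by simp
    show "g \<le> i" using ig by simp
    have CF: "C i - F0 = \<sigma> ` {Suc g..i}" unfolding C_def F0_def
      using image_set_diff[OF inj, of "{1..i}" "{1..g}"] diff_seg[OF ig(1)] by simp
    show "\<exists>\<F>. \<F> \<subseteq> {F. F \<subseteq> S \<and> card F = g} \<and>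
                real (card \<F>) \<ge> 1 / real n * real (2 * g choose g) \<and>
                (\<forall>F\<in>\<F>. (C i - F0) \<union> F \<in> \<A>)"
    proof (intro exI[of _ "FFs \<A> \<sigma> (blk n g) g i"] conjI)
      show "FFs \<A> \<sigma> (blk n g) g i \<subseteq> {F. F \<subseteq> S \<and> card F = g}" unfolding FFs_def S_def by auto
      show "real (card (FFs \<A> \<sigma> (blk n g) g i)) \<ge> 1 / real n * real (2 * g choose g)"
        using Iprop(2)[OF iI] unfolding good_def by blast
      show "\<forall>F\<in>FFs \<A> \<sigma> (blk n g) g i. (C i - F0) \<union> F \<in> \<A>" unfolding CF FFs_def by auto
    qed
  qed
  have partT: "\<exists>D0. D0 \<subseteq> T \<and> card D0 = h \<and>
          (\<forall>i\<in>I. C i \<inter> T = D0 \<and> i \<ge> h) \<and>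
          (\<forall>i\<in>I. \<exists>\<D>. \<D> \<subseteq> {D. D \<subseteq> T \<and> card D = h} \<and>
                real (card \<D>) \<ge> 1 / real n * real (2 * h choose h) \<and>
                (\<forall>D\<in>\<D>. (C i - D0) \<union> D \<in> \<A>) \<and>
                (\<forall>D\<in>\<D>. real (card {D'\<in>\<D>. neighbours D D'}) \<ge> real n powr (4/3)))"
  proof (intro exI[of _ D0] conjI ballI)
    show "D0 \<subseteq> T" unfolding D0_def T_def blk_def by (intro image_mono) auto
    show "card D0 = h" unfolding D0_def using inj by (simp add: card_image inj_on_subset)
    fix i assume iI: "i \<in> I"
    have i: "h \<le> i" "i \<le> n - h" using Iprop(1)[OF iI] by auto
    show "C i \<inter> T = D0" unfolding C_def T_def D0_def
      using image_Int[OF inj, of "{1..i}" "blk n h"] inter_blk[OF i] by simp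
    show "h \<le> i" using i by simp
    have CD: "C i - D0 = \<sigma> ` {Suc h..i}" unfolding C_def D0_def
      using image_set_diff[OF inj, of "{1..i}" "{1..h}"] diff_seg[OF i(1)] by simp
    let ?D = "core d (FFs \<A> \<sigma> (blk n h) h i)"
    have Dsub: "?D \<subseteq> FFs \<A> \<sigma> (blk n h) h i" by (rule core_sub)
    show "\<exists>\<D>. \<D> \<subseteq> {D. D \<subseteq> T \<and> card D = h} \<and>
                real (card \<D>) \<ge> 1 / real n * real (2 * h choose h) \<and>
                (\<forall>D\<in>\<D>. (C i - D0) \<union> D \<in> \<A>) \<and>
                (\<forall>D\<in>\<D>. real (card {D'\<in>\<D>. neighbours D D'}) \<ge> real n powr (4/3))"
    proof (intro exI[of _ ?D] conjI)
      show "?D \<subseteq> {D. D \<subseteq> T \<and> card D = h}" using Dsub unfolding FFs_def T_def by auto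
      show "real (card ?D) \<ge> 1 / real n * real (2 * h choose h)"
        using Iprop(2)[OF iI] unfolding good_def by blast
      show "\<forall>D\<in>?D. (C i - D0) \<union> D \<in> \<A>" using Dsub unfolding CD FFs_def by auto
      show "\<forall>D\<in>?D. real (card {D'\<in>?D. neighbours D D'}) \<ge> real n powr (4/3)"
        using core_deg[OF finF[OF finblk]] unfolding d_def by blast
    qed
  qed
  show ?thesis unfolding Let_def sdef tdef
    using c_ST c_T cS cT mc cI cA bound partS partT by (intro exI[of _ S] exI[of _ T] exI[of _ C] exI[of _ I]) simp
qed

theorem lemma2:
  "\<exists>N0::nat. \<forall>n\<ge>N0. \<forall>\<A>. \<A> \<subseteq> Pow {1..n} \<longrightarrow>
    (let s = s_par n; t = t_par n in
     \<exists>S T C I.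
       S \<subseteq> T \<and> T \<subseteq> {1..n} \<and> card S = s \<and> card T = t \<and>
       max_chain n C \<and> I \<subseteq> {0..n} \<and>
       (\<forall>i\<in>I. C i \<in> \<A>) \<and>
       (\<Sum>i\<in>I. real (n choose i)) \<ge> real (card \<A>) - 2^10 / real n powr (2/3) * 2^n \<and>
       (\<exists>F0. F0 \<subseteq> S \<and> card F0 = s div 2 \<and>
          (\<forall>i\<in>I. C i \<inter> S = F0 \<and> i \<ge> s div 2) \<and>
          (\<forall>i\<in>I. \<exists>\<F>. \<F> \<subseteq> {F. F \<subseteq> S \<and> card F = s div 2} \<and>
                real (card \<F>) \<ge> 1 / real n * real (s choose (s div 2)) \<and>
                (\<forall>F\<in>\<F>. (C i - F0) \<union> F \<in> \<A>))) \<and>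
       (\<exists>D0. D0 \<subseteq> T \<and> card D0 = t div 2 \<and>
          (\<forall>i\<in>I. C i \<inter> T = D0 \<and> i \<ge> t div 2) \<and>
          (\<forall>i\<in>I. \<exists>\<D>. \<D> \<subseteq> {D. D \<subseteq> T \<and> card D = t div 2} \<and>
                real (card \<D>) \<ge> 1 / real n * real (t choose (t div 2)) \<and>
                (\<forall>D\<in>\<D>. (C i - D0) \<union> D \<in> \<A>) \<and>
                (\<forall>D\<in>\<D>. real (card {D'\<in>\<D>. neighbours D D'}) \<ge> real n powr (4/3)))))"
  proof -
  obtain N0 where N0: "\<And>n. n \<ge> N0 \<Longrightarrow> real n / 2 \<ge> 2 * sqrt (real n * ln (real n)) + 2 \<and> 2 * real n powr (3/5) \<le> real n / 4"
    using eventually_conj[OF E1 E2] unfolding eventually_at_top_linorder by blast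
  show ?thesis
    apply (rule exI[of _ N0])
    apply (intro allI impI)
    apply (rule lemma2_fixed)
    using N0 by auto
qed

end
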